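(* Let $\mathcal H_d$ be a Hilbert space of finite dimension $d$ and let $\mathsf C=(C_1,\dots,C_n)$ be an $n$-outcome observable (POVM) on $\mathcal H_d$. Then the boundariness of $\mathsf C$ in the convex set of $n$-outcome observables on $\mathcal H_d$ equals $b(\mathsf C)=\lambda_{\min}$, where $\lambda_{\min}$ is the smallest number among all eigenvalues of all the effects $C_1,\dots,C_n$.
   Context: An $n$-outcome observable on $\mathcal H_d$ is an $n$-tuple of positive operators $(C_1,\dots,C_n)$ with $\sum_j C_j=I$; the set of these is convex under componentwise convex combinations. For a convex set $Z$ and $x,y\in Z$, the weight function is $t_y(x)=\sup\{0\leq t<1 : \frac{y-tx}{1-t}\in Z\}$, and the boundariness of $y$ is $b(y)=\inf_{x\in Z}t_y(x)$. *)

theory Defs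
  imports "Jordan_Normal_Form.Jordan_Normal_Form" "Jordan_Normal_Form.Gram_Schmidt"
begin

text \<open>Positive operator (effect candidate) on the d-dimensional complex Hilbert space C^d:
  a d x d complex matrix A with <psi, A psi> >= 0 for all psi (complex order: real and nonnegative).\<close>
definition positive_op :: "nat \<Rightarrow> complex mat \<Rightarrow> bool" where
  "positive_op d A \<longleftrightarrow> A \<in> carrier_mat d d \<and> (\<forall>v \<in> carrier_vec d. 0 \<le> (A *\<^sub>v v) \<bullet>c v)"

definition observables :: "nat \<Rightarrow> nat \<Rightarrow> (nat \<Rightarrow> complex mat) set" where
  "observables d n = {C. (\<forall>j<n. positive_op d (C j)) \<and> (\<forall>j\<ge>n. C j = 0\<^sub>m d d)
      \<and> foldr (+) (map C [0..<n]) (0\<^sub>m d d) = 1\<^sub>m d}"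

definition obs_comb :: "real \<Rightarrow> (nat \<Rightarrow> complex mat) \<Rightarrow> (nat \<Rightarrow> complex mat) \<Rightarrow> nat \<Rightarrow> complex mat" where
  "obs_comb t y x = (\<lambda>j. complex_of_real (1 / (1 - t)) \<cdot>\<^sub>m (y j - complex_of_real t \<cdot>\<^sub>m x j))"

definition weight :: "nat \<Rightarrow> nat \<Rightarrow> (nat \<Rightarrow> complex mat) \<Rightarrow> (nat \<Rightarrow> complex mat) \<Rightarrow> real" where
  "weight d n y x = Sup {t. 0 \<le> t \<and> t < 1 \<and> obs_comb t y x \<in> observables d n}"

definition boundariness :: "nat \<Rightarrow> nat \<Rightarrow> (nat \<Rightarrow> complex mat) \<Rightarrow> real" where
  "boundariness d n y = Inf (weight d n y ` observables d n)"

end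

theory Submission imports Defs "HOL-Analysis.Function_Topology" "HOL-Analysis.Topology_Euclidean_Space" begin

hide_type (open) Finite_Cartesian_Product.vec
hide_const (open) Finite_Cartesian_Product.vec
no_notation Finite_Cartesian_Product.vec_nth (infixl "$" 90)

definition Qf :: "nat \<Rightarrow> complex mat \<Rightarrow> (nat \<Rightarrow> complex) \<Rightarrow> complex" where
  "Qf d A x = (\<Sum>i<d. \<Sum>k<d. A $$ (i,k) * x k * cnj (x i))"

definition Nf :: "nat \<Rightarrow> (nat \<Rightarrow> complex) \<Rightarrow> real" where
  "Nf d x = (\<Sum>i<d. (cmod (x i))^2)"

lemma Qf_cong: "(\<And>i. i < d \<Longrightarrow> x i = y i) \<Longrightarrow> Qf d A x = Qf d A y"
  unfolding Qf_def by (intro sum.cong refl) auto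

lemma Nf_cong: "(\<And>i. i < d \<Longrightarrow> x i = y i) \<Longrightarrow> Nf d x = Nf d y"
  unfolding Nf_def by (intro sum.cong refl) auto

lemma Nf_nonneg: "0 \<le> Nf d x"
  unfolding Nf_def by (intro sum_nonneg) auto

lemma Nf_complex: "complex_of_real (Nf d x) = (\<Sum>i<d. x i * cnj (x i))"
  unfolding Nf_def of_real_sum by (intro sum.cong refl) (metis complex_norm_square of_real_power)

lemma qf_vec:
  assumes A: "A \<in> carrier_mat d d" and v: "v \<in> carrier_vec d"
  shows "(A *\<^sub>v v) \<bullet>c v = Qf d A (\<lambda>i. v $ i)"
proof -
  have "(A *\<^sub>v v) \<bullet>c v = (\<Sum>i\<in>{0..<d}. (A *\<^sub>v v) $ i * cnj (v $ i))"
    using A v by (simp add: scalar_prod_def)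
  also have "\<dots> = (\<Sum>i<d. (\<Sum>k<d. A $$ (i,k) * v $ k) * cnj (v $ i))"
    using A v by (intro sum.cong) (auto simp: scalar_prod_def atLeast0LessThan)
  also have "\<dots> = Qf d A (\<lambda>i. v $ i)"
    unfolding Qf_def by (simp add: sum_distrib_right)
  finally show ?thesis .
qed

lemma pos_iff:
  assumes A: "A \<in> carrier_mat d d"
  shows "positive_op d A \<longleftrightarrow> (\<forall>x. 0 \<le> Qf d A x)"
proof
  assume p: "positive_op d A"
  show "\<forall>x. 0 \<le> Qf d A x"
  proof
    fix x
    have "0 \<le> (A *\<^sub>v Matrix.vec d x) \<bullet>c Matrix.vec d x" using p unfolding positive_op_def by auto
    also have "\<dots> = Qf d A (\<lambda>i. Matrix.vec d x $ i)" by (rule qf_vec[OF A]) auto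
    also have "\<dots> = Qf d A x" by (rule Qf_cong) auto
    finally show "0 \<le> Qf d A x" .
  qed
next
  assume "\<forall>x. 0 \<le> Qf d A x"
  then show "positive_op d A" unfolding positive_op_def using A qf_vec[OF A] by auto
qed

lemma Qf_comb:
  assumes A: "A \<in> carrier_mat d d" and B: "B \<in> carrier_mat d d"
  shows "Qf d (complex_of_real c \<cdot>\<^sub>m (A - complex_of_real t \<cdot>\<^sub>m B)) x
     = complex_of_real c * (Qf d A x - complex_of_real t * Qf d B x)"
proof -
  have "Qf d (complex_of_real c \<cdot>\<^sub>m (A - complex_of_real t \<cdot>\<^sub>m B)) x =
     (\<Sum>i<d. \<Sum>k<d. complex_of_real c * (A $$ (i,k) * x k * cnj (x i) - complex_of_real t * (B $$ (i,k) * x k * cnj (x i))))"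
    unfolding Qf_def using A B by (intro sum.cong refl) (auto simp: algebra_simps)
  also have "\<dots> = complex_of_real c * (Qf d A x - complex_of_real t * Qf d B x)"
    unfolding Qf_def by (simp add: sum_distrib_left right_diff_distrib sum_subtractf)
  finally show ?thesis .
qed

lemma Qf_one: "Qf d (1\<^sub>m d) x = complex_of_real (Nf d x)"
proof -
  have "Qf d (1\<^sub>m d) x = (\<Sum>i<d. \<Sum>k<d. (if i = k then x k * cnj (x i) else 0))"
    unfolding Qf_def by (intro sum.cong refl) auto
  also have "\<dots> = (\<Sum>i<d. x i * cnj (x i))" by simp
  finally show ?thesis by (simp add: Nf_complex)
qed

lemma Qf_zero: "Qf d (0\<^sub>m d d) x = 0"
  unfolding Qf_def by simp

lemma foldr_mat:
  assumes "\<forall>j\<in>set xs. f j \<in> carrier_mat d d"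
  shows "foldr (+) (map f xs) (0\<^sub>m d d) \<in> carrier_mat d d \<and>
    (\<forall>i<d. \<forall>k<d. foldr (+) (map f xs) (0\<^sub>m d d) $$ (i,k) = (\<Sum>j\<leftarrow>xs. f j $$ (i,k)))"
  using assms by (induction xs) auto

lemma foldr_mat_upt:
  assumes "\<forall>j<n. f j \<in> carrier_mat d d"
  shows "foldr (+) (map f [0..<n]) (0\<^sub>m d d) \<in> carrier_mat d d \<and>
    (\<forall>i<d. \<forall>k<d. foldr (+) (map f [0..<n]) (0\<^sub>m d d) $$ (i,k) = (\<Sum>j<n. f j $$ (i,k)))"
proof -
  have "(\<Sum>j\<leftarrow>[0..<n]. f j $$ (i,k)) = (\<Sum>j<n. f j $$ (i,k))" for i k
    by (metis atLeast0LessThan set_upt sum_set_upt_conv_sum_list_nat)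
  then show ?thesis using foldr_mat[of "[0..<n]" f d] assms by auto
qed

lemma Qf_entries:
  assumes "\<forall>i<d. \<forall>k<d. M $$ (i,k) = (\<Sum>j<n. f j $$ (i,k))"
  shows "Qf d M x = (\<Sum>j<n. Qf d (f j) x)"
proof -
  have "Qf d M x = (\<Sum>i<d. \<Sum>k<d. \<Sum>j<n. f j $$ (i,k) * x k * cnj (x i))"
    unfolding Qf_def using assms by (intro sum.cong refl) (auto simp: sum_distrib_right)
  also have "\<dots> = (\<Sum>j<n. Qf d (f j) x)"
    unfolding Qf_def by (simp add: sum.swap[of _ "{..<n}"])
  finally show ?thesis .
qed

lemma real_quad:
  fixes r g :: real
  assumes H: "\<forall>s. 0 \<le> s*r + s^2*g"
  shows "r = 0"
proof (rule ccontr)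
  assume r: "r \<noteq> 0"
  define a where "a = \<bar>g\<bar> + 1"
  have gp: "a > 0" by (simp add: a_def)
  define s where "s = -r/a"
  have "s*r + s^2*g \<le> s*r + s^2*(a - 1)"
    unfolding a_def by (intro add_left_mono mult_left_mono) auto
  also have "\<dots> = -(r^2)/a^2"
    using gp by (simp add: s_def power2_eq_square field_simps)
  also have "\<dots> < 0" using r gp by simp
  finally show False using H by (metis not_less)
qed

lemma beta_zero:
  fixes \<alpha> \<beta> \<gamma> :: complex
  assumes H: "\<forall>c. 0 \<le> c*\<alpha> + cnj c*\<beta> + c*cnj c*\<gamma>" and g: "0 \<le> \<gamma>"
  shows "\<beta> = 0"
proof -
  from g have gi: "Im \<gamma> = 0" "Re \<gamma> \<ge> 0" by (auto simp: less_eq_complex_def)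
  have c1: "Im \<alpha> + Im \<beta> = 0" using H[rule_format, of 1] gi by (simp add: less_eq_complex_def)
  have c2: "Re \<alpha> - Re \<beta> = 0" using H[rule_format, of "\<i>"] gi by (simp add: less_eq_complex_def)
  have "\<forall>s. 0 \<le> s*(Re \<alpha> + Re \<beta>) + s^2 * Re \<gamma>"
  proof
    fix s :: real
    show "0 \<le> s*(Re \<alpha> + Re \<beta>) + s^2 * Re \<gamma>"
      using H[rule_format, of "complex_of_real s"] gi
      by (simp add: less_eq_complex_def power2_eq_square algebra_simps)
  qed
  then have c3: "Re \<alpha> + Re \<beta> = 0" by (rule real_quad)
  have "\<forall>s. 0 \<le> s*(Im \<beta> - Im \<alpha>) + s^2 * Re \<gamma>"
  proof
    fix s :: real
    show "0 \<le> s*(Im \<beta> - Im \<alpha>) + s^2 * Re \<gamma>"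
      using H[rule_format, of "\<i> * complex_of_real s"] gi
      by (simp add: less_eq_complex_def power2_eq_square algebra_simps)
  qed
  then have c4: "Im \<beta> - Im \<alpha> = 0" by (rule real_quad)
  show ?thesis using c1 c2 c3 c4 by (intro complex_eqI) auto
qed

lemma coord_cont[continuous_intros]: "continuous_on S (\<lambda>x::nat \<Rightarrow> 'a::topological_space. x i)"
  by (rule continuous_on_subset[OF continuous_on_product_coordinates]) auto

lemma rayleigh:
  assumes A: "A \<in> carrier_mat d d" and d: "0 < d" and pos: "\<forall>x. 0 \<le> Qf d A x"
  shows "\<exists>m. eigenvalue A (complex_of_real m) \<and> (\<forall>x. m * Nf d x \<le> Re (Qf d A x))"
proof -
  define S where "S = (\<lambda>i::nat. if i < d then cball (0::complex) 1 else {0})"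
  define K where "K = (PiE UNIV S) \<inter> {x. Nf d x = 1}"
  have contN: "continuous_on UNIV (\<lambda>x. Nf d x)" unfolding Nf_def
    by (intro continuous_intros)
  have cK: "compact K"
  proof -
    have "compactin (product_topology (\<lambda>i. euclidean) UNIV) (PiE UNIV S)"
      unfolding compactin_PiE by (auto simp: S_def compact_cball)
    then have "compact (PiE UNIV S)" by (simp add: euclidean_product_topology)
    moreover have "closed {x. Nf d x = 1}" using contN by (intro closed_Collect_eq) auto
    ultimately show ?thesis unfolding K_def by (rule compact_Int_closed)
  qed
  define e0 where "e0 = (\<lambda>i::nat. if i = 0 then (1::complex) else 0)"
  have "Nf d e0 = (\<Sum>i<d. if i = 0 then 1 else 0)"
    unfolding Nf_def e0_def by (intro sum.cong refl) auto
  also have "\<dots> = 1" using d by simp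
  finally have "e0 \<in> K" unfolding K_def S_def e0_def using d by (auto simp: PiE_iff)
  have contR: "continuous_on K (\<lambda>x. Re (Qf d A x))" unfolding Qf_def
    by (intro continuous_intros)
  obtain x0 where x0K: "x0 \<in> K" and xmin: "\<forall>y\<in>K. Re (Qf d A x0) \<le> Re (Qf d A y)"
    using continuous_attains_inf[OF cK _ contR] \<open>e0 \<in> K\<close> by blast
  define m where "m = Re (Qf d A x0)"
  have N0: "Nf d x0 = 1" using x0K K_def by auto
  have bound: "\<forall>y. m * Nf d y \<le> Re (Qf d A y)"
  proof
    fix y
    show "m * Nf d y \<le> Re (Qf d A y)"
    proof (cases "Nf d y = 0")
      case True
      then have "\<forall>i<d. y i = 0" unfolding Nf_def
        using sum_nonneg_eq_0_iff[of "{..<d}" "\<lambda>i. (cmod (y i))^2"] by auto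
      then have "Qf d A y = 0" unfolding Qf_def by simp
      then show ?thesis using True by simp
    next
      case False
      then have Npos: "Nf d y > 0" using Nf_nonneg[of d y] by linarith
      define s where "s = sqrt (Nf d y)"
      have spos: "s > 0" and s2: "s^2 = Nf d y" using Npos by (auto simp: s_def)
      define z where "z = (\<lambda>i. if i < d then y i / complex_of_real s else 0)"
      have "Nf d z = Nf d (\<lambda>i. y i / complex_of_real s)" by (rule Nf_cong) (simp add: z_def)
      also have "\<dots> = Nf d y / s^2" unfolding Nf_def
        by (simp add: sum_divide_distrib norm_divide power_divide)
      finally have Nz: "Nf d z = 1" using s2 Npos by simp
      have "cmod (y i) \<le> s" if "i < d" for i
      proof -
        have "(cmod (y i))^2 \<le> Nf d y" unfolding Nf_def
          by (rule member_le_sum) (use that in auto)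
        then show ?thesis using s2 spos by (metis abs_norm_cancel real_le_rsqrt s_def)
      qed
      then have "z \<in> PiE UNIV S" using spos unfolding z_def S_def
        by (auto simp: PiE_iff norm_divide)
      with Nz have zK: "z \<in> K" unfolding K_def by auto
      have "Qf d A z = Qf d A (\<lambda>i. y i / complex_of_real s)" by (rule Qf_cong) (simp add: z_def)
      also have "\<dots> = Qf d A y / complex_of_real (s^2)" unfolding Qf_def
        by (simp add: sum_divide_distrib power2_eq_square)
      finally have "Re (Qf d A z) = Re (Qf d A y) / Nf d y" using s2 by simp
      moreover have "m \<le> Re (Qf d A z)" using xmin zK unfolding m_def by auto
      ultimately show ?thesis using Npos by (simp add: pos_le_divide_eq)
    qed
  qed
  define L where "L = (\<lambda>z i. (\<Sum>k<d. A $$ (i,k) * z k) - complex_of_real m * z i)"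
  define Q' where "Q' = (\<lambda>z. \<Sum>i<d. L z i * cnj (z i))"
  have Q'_eq: "Q' z = Qf d A z - complex_of_real (m * Nf d z)" for z
    unfolding Q'_def L_def Qf_def of_real_mult Nf_complex
    by (simp add: sum_distrib_right sum_distrib_left sum_subtractf left_diff_distrib mult.assoc)
  have Qreal: "Qf d A z = complex_of_real (Re (Qf d A z))" for z
    using pos by (intro complex_eqI) (auto simp: less_eq_complex_def)
  have Q'pos: "0 \<le> Q' z" for z
  proof -
    have "Q' z = complex_of_real (Re (Qf d A z) - m * Nf d z)"
      unfolding Q'_eq by (subst Qreal) simp
    then show ?thesis using bound by (simp add: less_eq_complex_def)
  qed
  have Q'0: "Q' x0 = 0"
    unfolding Q'_eq N0 by (subst Qreal) (simp add: m_def)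
  have Lin: "L (\<lambda>i. x0 i + c * w i) i = L x0 i + c * L w i" for c w i
    unfolding L_def by (simp add: distrib_left sum.distrib sum_distrib_left algebra_simps)
  have expand: "Q' (\<lambda>i. x0 i + c * w i) = Q' x0 + c * (\<Sum>i<d. L w i * cnj (x0 i))
      + cnj c * (\<Sum>i<d. L x0 i * cnj (w i)) + c * cnj c * Q' w" for c w
    unfolding Q'_def Lin by (simp add: algebra_simps sum.distrib sum_distrib_left)
  define w where "w = L x0"
  have "\<forall>c. 0 \<le> c * (\<Sum>i<d. L w i * cnj (x0 i)) + cnj c * (\<Sum>i<d. L x0 i * cnj (w i)) + c * cnj c * Q' w"
    using Q'pos expand Q'0 by (metis add_0)
  then have "(\<Sum>i<d. L x0 i * cnj (w i)) = 0" using Q'pos by (intro beta_zero) auto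
  then have "complex_of_real (Nf d (L x0)) = 0" unfolding Nf_complex w_def .
  then have "Nf d (L x0) = 0" by simp
  then have L0: "\<forall>i<d. L x0 i = 0" unfolding Nf_def
    using sum_nonneg_eq_0_iff[of "{..<d}" "\<lambda>i. (cmod (L x0 i))^2"] by auto
  obtain i0 where i0: "i0 < d" "x0 i0 \<noteq> 0"
  proof (rule ccontr)
    assume "\<not> thesis"
    with that have "\<forall>i<d. x0 i = 0" by blast
    then have "Nf d x0 = 0" unfolding Nf_def by simp
    with N0 show False by simp
  qed
  define v where "v = Matrix.vec d x0"
  have "eigenvector A v (complex_of_real m)" unfolding eigenvector_def
  proof (intro conjI)
    show "v \<in> carrier_vec (dim_row A)" using A by (simp add: v_def)
    show "v \<noteq> 0\<^sub>v (dim_row A)"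
    proof
      assume "v = 0\<^sub>v (dim_row A)"
      then have "v $ i0 = 0" using A i0 by simp
      then show False using i0 by (simp add: v_def)
    qed
    show "A *\<^sub>v v = complex_of_real m \<cdot>\<^sub>v v"
    proof (rule eq_vecI)
      fix i assume "i < dim_vec (complex_of_real m \<cdot>\<^sub>v v)"
      then have i: "i < d" by (simp add: v_def)
      have "(A *\<^sub>v v) $ i = (\<Sum>k<d. A $$ (i,k) * x0 k)"
        using A i by (simp add: v_def scalar_prod_def atLeast0LessThan)
      also have "\<dots> = complex_of_real m * x0 i" using L0 i unfolding L_def by auto
      finally show "(A *\<^sub>v v) $ i = (complex_of_real m \<cdot>\<^sub>v v) $ i" using i by (simp add: v_def)
    qed (use A in \<open>simp add: v_def\<close>)
  qed
  then show ?thesis using bound unfolding eigenvalue_def by blast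
qed

lemma eig_Qf:
  assumes A: "A \<in> carrier_mat d d" and e: "eigenvalue A (complex_of_real lam)"
  shows "\<exists>x. Nf d x > 0 \<and> Qf d A x = complex_of_real (lam * Nf d x)"
proof -
  obtain v where v: "v \<in> carrier_vec d" "v \<noteq> 0\<^sub>v d" "A *\<^sub>v v = complex_of_real lam \<cdot>\<^sub>v v"
    using e A unfolding eigenvalue_def eigenvector_def by auto
  have vv: "v \<bullet>c v = complex_of_real (Nf d (\<lambda>i. v $ i))"
    using v(1) unfolding Nf_complex by (simp add: scalar_prod_def atLeast0LessThan)
  have "Qf d A (\<lambda>i. v $ i) = (A *\<^sub>v v) \<bullet>c v" by (rule qf_vec[OF A v(1), symmetric])
  also have "\<dots> = complex_of_real lam * (v \<bullet>c v)" using v by simp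
  finally have Q: "Qf d A (\<lambda>i. v $ i) = complex_of_real (lam * Nf d (\<lambda>i. v $ i))" using vv by simp
  have "Nf d (\<lambda>i. v $ i) \<noteq> 0"
  proof
    assume "Nf d (\<lambda>i. v $ i) = 0"
    then have "\<forall>i<d. v $ i = 0" unfolding Nf_def
      using sum_nonneg_eq_0_iff[of "{..<d}" "\<lambda>i. (cmod (v $ i))^2"] by auto
    then have "v = 0\<^sub>v d" using v(1) by (intro eq_vecI) auto
    with v(2) show False by simp
  qed
  then have "Nf d (\<lambda>i. v $ i) > 0" using Nf_nonneg[of d] by (metis less_eq_real_def)
  then show ?thesis using Q by blast
qed


lemma obs_facts:
  assumes X: "X \<in> observables d n"
  shows "\<forall>j. X j \<in> carrier_mat d d"
    and "\<forall>j<n. \<forall>x. 0 \<le> Qf d (X j) x"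
    and "\<forall>i<d. \<forall>k<d. (\<Sum>j<n. X j $$ (i,k)) = 1\<^sub>m d $$ (i,k)"
    and "\<forall>x. (\<Sum>j<n. Qf d (X j) x) = complex_of_real (Nf d x)"
proof -
  from X have pos: "\<forall>j<n. positive_op d (X j)" and z: "\<forall>j\<ge>n. X j = 0\<^sub>m d d"
    and s: "foldr (+) (map X [0..<n]) (0\<^sub>m d d) = 1\<^sub>m d"
    unfolding observables_def by auto
  show car: "\<forall>j. X j \<in> carrier_mat d d"
  proof
    fix j show "X j \<in> carrier_mat d d"
      using pos z unfolding positive_op_def by (cases "j < n") auto
  qed
  show "\<forall>j<n. \<forall>x. 0 \<le> Qf d (X j) x" using pos car pos_iff by blast
  have fm: "\<forall>i<d. \<forall>k<d. foldr (+) (map X [0..<n]) (0\<^sub>m d d) $$ (i,k) = (\<Sum>j<n. X j $$ (i,k))"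
    using foldr_mat_upt[of n X d] car by auto
  then show ent: "\<forall>i<d. \<forall>k<d. (\<Sum>j<n. X j $$ (i,k)) = 1\<^sub>m d $$ (i,k)"
    using s by auto
  show "\<forall>x. (\<Sum>j<n. Qf d (X j) x) = complex_of_real (Nf d x)"
  proof
    fix x
    have "Qf d (1\<^sub>m d) x = (\<Sum>j<n. Qf d (X j) x)"
      by (rule Qf_entries) (use ent in auto)
    then show "(\<Sum>j<n. Qf d (X j) x) = complex_of_real (Nf d x)" by (simp add: Qf_one)
  qed
qed

lemma Qf_real: "0 \<le> (z::complex) \<Longrightarrow> z = complex_of_real (Re z)"
  by (intro complex_eqI) (auto simp: less_eq_complex_def)

lemma obs_le:
  assumes X: "X \<in> observables d n" and j: "j < n"
  shows "Re (Qf d (X j) x) \<le> Nf d x"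
proof -
  have "Re (Qf d (X j) x) \<le> (\<Sum>l<n. Re (Qf d (X l) x))"
    using obs_facts(2)[OF X] j by (intro member_le_sum) (auto simp: less_eq_complex_def)
  also have "\<dots> = Re (\<Sum>l<n. Qf d (X l) x)" by simp
  also have "\<dots> = Nf d x" using obs_facts(4)[OF X] by simp
  finally show ?thesis .
qed

lemma comb_zero:
  assumes "\<forall>j. C j \<in> carrier_mat d d" "\<forall>j. X j \<in> carrier_mat d d"
  shows "obs_comb 0 C X = C"
proof
  fix j
  show "obs_comb 0 C X j = C j"
  proof -
    have c: "C j \<in> carrier_mat d d" "X j \<in> carrier_mat d d" using assms by auto
    show ?thesis unfolding obs_comb_def using c by (intro eq_matI) auto
  qed
qed

theorem proposition4:
  fixes d n :: nat and C :: "nat \<Rightarrow> complex mat"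
  assumes "0 < d"
    and "C \<in> observables d n"
  shows "boundariness d n C =
    Min {lam :: real. \<exists>j<n. eigenvalue (C j) (complex_of_real lam)}"
proof -
  note d = assms(1) and CO = assms(2)
  define S where "S = {lam :: real. \<exists>j<n. eigenvalue (C j) (complex_of_real lam)}"
  have Ccar: "\<forall>j. C j \<in> carrier_mat d d" using obs_facts(1)[OF CO] .
  have CQ: "\<forall>j<n. \<forall>x. 0 \<le> Qf d (C j) x" using obs_facts(2)[OF CO] .
  have Cent: "\<forall>i<d. \<forall>k<d. (\<Sum>j<n. C j $$ (i,k)) = 1\<^sub>m d $$ (i,k)" using obs_facts(3)[OF CO] .
  have n: "0 < n"
  proof (rule ccontr)
    assume "\<not> 0 < n"
    then have "n = 0" by simp
    then show False using Cent[rule_format, of 0 0] d by simp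
  qed
  have finS: "finite S"
  proof -
    have "S \<subseteq> (\<Union>j<n. complex_of_real -` {z. poly (char_poly (C j)) z = 0})"
      unfolding S_def using eigenvalue_root_char_poly Ccar by blast
    moreover have "finite (complex_of_real -` {z. poly (char_poly (C j)) z = 0})" for j
    proof (rule finite_vimageI)
      have "coeff (char_poly (C j)) d = 1" using degree_monic_char_poly[of "C j" d] Ccar by auto
      then have "char_poly (C j) \<noteq> 0" by auto
      then show "finite {z. poly (char_poly (C j)) z = 0}" by (rule poly_roots_finite)
      show "inj complex_of_real" by (meson injI of_real_eq_iff)
    qed
    ultimately show ?thesis by (meson finite_UN_I finite_lessThan finite_subset)
  qed
  have ray: "\<exists>m. m \<in> S \<and> (\<forall>x. m * Nf d x \<le> Re (Qf d (C j) x))" if j: "j < n" for j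
    using rayleigh[of "C j" d] Ccar CQ j d unfolding S_def by blast
  then have neS: "S \<noteq> {}" using n by blast
  define mu where "mu = Min S"
  have muS: "mu \<in> S" using finS neS unfolding mu_def by (rule Min_in)
  have mule: "mu \<le> m" if "m \<in> S" for m using finS that unfolding mu_def by simp
  have low: "mu * Nf d x \<le> Re (Qf d (C j) x)" if j: "j < n" for j x
  proof -
    obtain m where m: "m \<in> S" "\<forall>x. m * Nf d x \<le> Re (Qf d (C j) x)" using ray[OF j] by blast
    have "mu * Nf d x \<le> m * Nf d x" using mule[OF m(1)] Nf_nonneg[of d x] by (rule mult_right_mono)
    also have "\<dots> \<le> Re (Qf d (C j) x)" using m(2) by blast
    finally show ?thesis .
  qed
  obtain j0 where j0: "j0 < n" "eigenvalue (C j0) (complex_of_real mu)" using muS unfolding S_def by blast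
  obtain u where u: "Nf d u > 0" "Qf d (C j0) u = complex_of_real (mu * Nf d u)"
    using eig_Qf[of "C j0" d mu] Ccar j0 by blast
  have mu1: "mu \<le> 1"
  proof -
    have "mu * Nf d u \<le> 1 * Nf d u" using obs_le[OF CO j0(1), of u] u by simp
    then show ?thesis using u(1) by (simp add: mult_le_cancel_right)
  qed
  define T where "T = (\<lambda>X. {t. 0 \<le> t \<and> t < 1 \<and> obs_comb t C X \<in> observables d n})"
  have wT: "weight d n C X = Sup (T X)" for X unfolding weight_def T_def by simp
  have T0: "0 \<in> T X" if X: "X \<in> observables d n" for X
    using comb_zero[OF Ccar obs_facts(1)[OF X]] CO unfolding T_def by simp
  have Tbdd: "bdd_above (T X)" for X unfolding T_def by (intro bdd_aboveI[of _ 1]) auto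
  have w0: "0 \<le> weight d n C X" if X: "X \<in> observables d n" for X
    unfolding wT using T0[OF X] Tbdd by (rule cSup_upper)
  have memb: "t \<in> T X" if X: "X \<in> observables d n" and t: "0 \<le> t" "t < 1" "t \<le> mu" for X t
  proof -
    have Xcar: "\<forall>j. X j \<in> carrier_mat d d" using obs_facts(1)[OF X] .
    define c where "c = 1 / (1 - t)"
    have cpos: "c > 0" using t unfolding c_def by simp
    have c1: "c * (1 - t) = 1" using t unfolding c_def by simp
    have oc: "obs_comb t C X j = complex_of_real c \<cdot>\<^sub>m (C j - complex_of_real t \<cdot>\<^sub>m X j)" for j
      unfolding obs_comb_def c_def ..
    have occar: "obs_comb t C X j \<in> carrier_mat d d" for j
      unfolding oc using Ccar Xcar by (intro smult_carrier_mat minus_carrier_mat) auto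
    have "positive_op d (obs_comb t C X j)" if j: "j < n" for j
      unfolding pos_iff[OF occar]
    proof
      fix x
      have e: "Qf d (obs_comb t C X j) x = complex_of_real c * (Qf d (C j) x - complex_of_real t * Qf d (X j) x)"
        unfolding oc using Ccar Xcar by (intro Qf_comb) auto
      have qc: "Qf d (C j) x = complex_of_real (Re (Qf d (C j) x))" using CQ j Qf_real by blast
      have qx: "Qf d (X j) x = complex_of_real (Re (Qf d (X j) x))"
        using obs_facts(2)[OF X] j Qf_real by blast
      have qx0: "0 \<le> Re (Qf d (X j) x)" using obs_facts(2)[OF X] j by (auto simp: less_eq_complex_def)
      have "t * Re (Qf d (X j) x) \<le> t * Nf d x" using obs_le[OF X j] t(1) by (rule mult_left_mono)
      also have "\<dots> \<le> mu * Nf d x" using t(3) Nf_nonneg[of d x] by (rule mult_right_mono)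
      also have "\<dots> \<le> Re (Qf d (C j) x)" using low[OF j] .
      finally have "0 \<le> c * (Re (Qf d (C j) x) - t * Re (Qf d (X j) x))" using cpos by simp
      then show "0 \<le> Qf d (obs_comb t C X j) x"
        unfolding e by (subst qc, subst qx) (simp add: less_eq_complex_def)
    qed
    moreover have "obs_comb t C X j = 0\<^sub>m d d" if j: "n \<le> j" for j
    proof -
      have "C j = 0\<^sub>m d d" "X j = 0\<^sub>m d d" using CO X j unfolding observables_def by auto
      then show ?thesis unfolding oc by (intro eq_matI) auto
    qed
    moreover have "foldr (+) (map (obs_comb t C X) [0..<n]) (0\<^sub>m d d) = 1\<^sub>m d"
    proof -
      have fm: "foldr (+) (map (obs_comb t C X) [0..<n]) (0\<^sub>m d d) \<in> carrier_mat d d \<and>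
        (\<forall>i<d. \<forall>k<d. foldr (+) (map (obs_comb t C X) [0..<n]) (0\<^sub>m d d) $$ (i,k) = (\<Sum>j<n. obs_comb t C X j $$ (i,k)))"
        using occar by (intro foldr_mat_upt) auto
      show ?thesis
      proof (rule eq_matI)
        fix i k assume ik: "i < dim_row (1\<^sub>m d)" "k < dim_col (1\<^sub>m d)"
        then have ik: "i < d" "k < d" by auto
        have "foldr (+) (map (obs_comb t C X) [0..<n]) (0\<^sub>m d d) $$ (i,k)
          = (\<Sum>j<n. complex_of_real c * (C j $$ (i,k) - complex_of_real t * X j $$ (i,k)))"
        proof -
          have dims: "dim_row (C j) = d" "dim_col (C j) = d" "dim_row (X j) = d" "dim_col (X j) = d" for j
            using Ccar Xcar by auto
          have "foldr (+) (map (obs_comb t C X) [0..<n]) (0\<^sub>m d d) $$ (i,k) = (\<Sum>j<n. obs_comb t C X j $$ (i,k))"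
            using fm ik by auto
          also have "\<dots> = (\<Sum>j<n. complex_of_real c * (C j $$ (i,k) - complex_of_real t * X j $$ (i,k)))"
            unfolding oc using ik dims by (intro sum.cong refl) simp
          finally show ?thesis .
        qed
        also have "\<dots> = complex_of_real c * ((\<Sum>j<n. C j $$ (i,k)) - complex_of_real t * (\<Sum>j<n. X j $$ (i,k)))"
          by (simp add: sum_distrib_left sum_subtractf right_diff_distrib)
        also have "\<dots> = complex_of_real (c * (1 - t)) * 1\<^sub>m d $$ (i,k)"
          using Cent obs_facts(3)[OF X] ik by (simp add: algebra_simps)
        also have "\<dots> = 1\<^sub>m d $$ (i,k)" using c1 by simp
        finally show "foldr (+) (map (obs_comb t C X) [0..<n]) (0\<^sub>m d d) $$ (i,k) = 1\<^sub>m d $$ (i,k)" .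
      qed (use fm in auto)
    qed
    ultimately show ?thesis unfolding T_def observables_def using t by auto
  qed
  have mu0: "0 \<le> mu"
  proof -
    have "0 \<le> Re (Qf d (C j0) u)" using CQ j0(1) by (auto simp: less_eq_complex_def)
    then have "0 \<le> mu * Nf d u" using u(2) by simp
    then show ?thesis using u(1) by (simp add: zero_le_mult_iff)
  qed
  have lower: "mu \<le> weight d n C X" if X: "X \<in> observables d n" for X
  proof (cases "mu < 1")
    case True
    then have "mu \<in> T X" using memb[OF X mu0] by simp
    then show ?thesis unfolding wT using Tbdd by (rule cSup_upper)
  next
    case False
    with mu1 have m1: "mu = 1" by simp
    show ?thesis
    proof (rule ccontr)
      assume "\<not> mu \<le> weight d n C X"
      then have lt: "Sup (T X) < 1" using m1 wT by simp
      define t' where "t' = (Sup (T X) + 1) / 2"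
      have "0 \<le> Sup (T X)" using w0[OF X] wT by simp
      then have "t' \<in> T X" using lt m1 by (intro memb[OF X]) (auto simp: t'_def)
      then have "t' \<le> Sup (T X)" using Tbdd by (rule cSup_upper)
      then show False using lt by (simp add: t'_def)
    qed
  qed
  define X0 where "X0 = (\<lambda>j. if j = j0 then 1\<^sub>m d else (0\<^sub>m d d :: complex mat))"
  have X0car: "X0 j \<in> carrier_mat d d" for j unfolding X0_def by auto
  have X0O: "X0 \<in> observables d n"
  proof -
    have p1: "positive_op d (1\<^sub>m d)"
      using pos_iff[of "1\<^sub>m d" d] by (simp add: Qf_one less_eq_complex_def Nf_nonneg)
    have p0: "positive_op d (0\<^sub>m d d)"
      using pos_iff[of "0\<^sub>m d d" d] by (simp add: Qf_zero)
    have "positive_op d (X0 j)" for j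
      unfolding X0_def using p0 p1 by simp
    moreover have "X0 j = 0\<^sub>m d d" if "n \<le> j" for j using that j0(1) unfolding X0_def by auto
    moreover have "foldr (+) (map X0 [0..<n]) (0\<^sub>m d d) = 1\<^sub>m d"
    proof -
      have fm: "foldr (+) (map X0 [0..<n]) (0\<^sub>m d d) \<in> carrier_mat d d \<and>
        (\<forall>i<d. \<forall>k<d. foldr (+) (map X0 [0..<n]) (0\<^sub>m d d) $$ (i,k) = (\<Sum>j<n. X0 j $$ (i,k)))"
        using X0car by (intro foldr_mat_upt) auto
      show ?thesis
      proof (rule eq_matI)
        fix i k assume ik: "i < dim_row (1\<^sub>m d)" "k < dim_col (1\<^sub>m d)"
        then have ik: "i < d" "k < d" by auto
        have "(\<Sum>j<n. X0 j $$ (i,k)) = (\<Sum>j<n. if j = j0 then 1\<^sub>m d $$ (i,k) else 0)"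
          using ik unfolding X0_def by (intro sum.cong refl) auto
        also have "\<dots> = 1\<^sub>m d $$ (i,k)" using j0(1) by simp
        finally show "foldr (+) (map X0 [0..<n]) (0\<^sub>m d d) $$ (i,k) = 1\<^sub>m d $$ (i,k)"
          using fm ik by simp
      qed (use fm in auto)
    qed
    ultimately show ?thesis unfolding observables_def by auto
  qed
  have upper: "weight d n C X0 \<le> mu"
    unfolding wT
  proof (rule cSup_least)
    show "T X0 \<noteq> {}" using T0[OF X0O] by blast
    fix t assume t: "t \<in> T X0"
    then have t01: "0 \<le> t" "t < 1" and tO: "obs_comb t C X0 \<in> observables d n" unfolding T_def by auto
    define c where "c = 1 / (1 - t)"
    have cpos: "c > 0" using t01 unfolding c_def by simp
    have oc: "obs_comb t C X0 j0 = complex_of_real c \<cdot>\<^sub>m (C j0 - complex_of_real t \<cdot>\<^sub>m 1\<^sub>m d)"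
      unfolding obs_comb_def c_def X0_def by simp
    have "0 \<le> Qf d (obs_comb t C X0 j0) u"
      using obs_facts(2)[OF tO] j0(1) by blast
    also have "Qf d (obs_comb t C X0 j0) u = complex_of_real c * (Qf d (C j0) u - complex_of_real t * Qf d (1\<^sub>m d) u)"
      unfolding oc using Ccar by (intro Qf_comb) auto
    also have "\<dots> = complex_of_real (c * ((mu - t) * Nf d u))"
      unfolding u(2) Qf_one by (simp add: algebra_simps)
    finally have "0 \<le> c * ((mu - t) * Nf d u)" by (simp add: less_eq_complex_def)
    then have "0 \<le> (mu - t) * Nf d u" using cpos by (simp add: zero_le_mult_iff)
    then show "t \<le> mu" using u(1) by (simp add: zero_le_mult_iff)
  qed
  have bddb: "bdd_below (weight d n C ` observables d n)"
    using w0 by (intro bdd_belowI[of _ 0]) auto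
  have "boundariness d n C \<le> mu"
    unfolding boundariness_def using cInf_lower[OF imageI[OF X0O] bddb] upper by linarith
  moreover have "mu \<le> boundariness d n C"
    unfolding boundariness_def using CO lower by (intro cInf_greatest) auto
  ultimately show ?thesis unfolding mu_def S_def by simp
qed

end
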